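(* Let $\mathbb{X}$ be a Banach space and $\delta>0$. Suppose $V\subset\mathbb{X}$ is a $\delta$-separated set with $\#V\geq2$ and there exist a line $L$ and a number $0\leq\alpha<1/8$ such that $\mathrm{dist}(x,L)\leq\alpha\delta$ for all $x\in V$. Let $\pi_L$ be any metric projection onto $L$ and let $\Pi_L$ be any $J$-projection onto $L$. Then there is an identification of $L$ with $\mathbb{R}$ (via an affine isometry) such that for all $x,y\in V$, $\pi_L(x)\leq\pi_L(y)$ if and only if $\Pi_L(x)\leq\Pi_L(y)$.
   Context: All Banach spaces are real; a line is a one-dimensional affine subspace. $V$ is $\delta$-separated if $|v-w|\geq\delta$ for distinct $v,w\in V$. A metric projection onto $L$ is any map $\pi_L:\mathbb{X}\to L$ with $|x-\pi_L(x)|=\mathrm{dist}(x,L)$. A normalized duality mapping is any (possibly nonlinear) map $J:\mathbb{X}\to\mathbb{X}^*$ with $|J(x)|_{\mathbb{X}^*}=|x|$ and $\langle J(x),x\rangle=|x|^2$ for all $x$. If $L$ is a one-dimensional linear subspace, the $J$-projection onto $L$ is $\Pi_L(x)=\langle J(v),x\rangle v$ where $v\in L$ with $|v|=1$ is fixed; for an affine line $L$ and any $q\in L$, $\Pi_L(x)=q+\Pi_{L-q}(x-q)$. *)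

theory Defs
  imports "HOL-Analysis.Analysis"
begin

definition is_line :: "'a::real_normed_vector set \<Rightarrow> bool" where
  "is_line L \<longleftrightarrow> (\<exists>q v. v \<noteq> 0 \<and> L = {q + t *\<^sub>R v | t. True})"

definition delta_separated :: "real \<Rightarrow> 'a::metric_space set \<Rightarrow> bool" where
  "delta_separated \<delta> V \<longleftrightarrow> (\<forall>v\<in>V. \<forall>w\<in>V. v \<noteq> w \<longrightarrow> dist v w \<ge> \<delta>)"

definition metric_projection :: "'a::real_normed_vector set \<Rightarrow> ('a \<Rightarrow> 'a) \<Rightarrow> bool" where
  "metric_projection L p \<longleftrightarrow> (\<forall>x. p x \<in> L \<and> norm (x - p x) = infdist x L)"

definition duality_mapping :: "('a::real_normed_vector \<Rightarrow> ('a \<Rightarrow>\<^sub>L real)) \<Rightarrow> bool" where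
  "duality_mapping J \<longleftrightarrow> (\<forall>x. norm (J x) = norm x \<and> blinfun_apply (J x) x = (norm x)\<^sup>2)"

definition J_projection :: "('a::real_normed_vector \<Rightarrow> ('a \<Rightarrow>\<^sub>L real)) \<Rightarrow> 'a \<Rightarrow> 'a \<Rightarrow> 'a \<Rightarrow> 'a" where
  "J_projection J q v x = q + (blinfun_apply (J v) (x - q)) *\<^sub>R v"

definition is_J_projection :: "'a::real_normed_vector set \<Rightarrow> ('a \<Rightarrow> 'a) \<Rightarrow> bool" where
  "is_J_projection L P \<longleftrightarrow> (\<exists>J q v. duality_mapping J \<and> q \<in> L \<and> q + v \<in> L \<and> norm v = 1
      \<and> P = J_projection J q v)"

end

theory Submission
  imports Defs
begin

theorem mainTheorem12:
  fixes V L :: "'a::banach set" and \<delta> \<alpha> :: real and pm PJ :: "'a \<Rightarrow> 'a"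
  assumes "\<delta> > 0"
    and "delta_separated \<delta> V"
    and "\<exists>a\<in>V. \<exists>b\<in>V. a \<noteq> b"
    and "is_line L"
    and "0 \<le> \<alpha>" and "\<alpha> < 1/8"
    and "\<forall>x\<in>V. infdist x L \<le> \<alpha> * \<delta>"
    and "metric_projection L pm"
    and "is_J_projection L PJ"
  shows "\<exists>\<phi> :: 'a \<Rightarrow> real.
           (\<forall>a\<in>L. \<forall>b\<in>L. \<bar>\<phi> a - \<phi> b\<bar> = dist a b) \<and> \<phi> ` L = UNIV \<and>
           (\<forall>x\<in>V. \<forall>y\<in>V. \<phi> (pm x) \<le> \<phi> (pm y) \<longleftrightarrow> \<phi> (PJ x) \<le> \<phi> (PJ y))"
proof -
  obtain J q v where J: "duality_mapping J" and q: "q \<in> L" and qv: "q + v \<in> L"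
    and nv: "norm v = 1" and PJ: "PJ = J_projection J q v"
    using assms(9) unfolding is_J_projection_def by blast
  obtain q0 v0 where v0: "v0 \<noteq> 0" and L: "L = {q0 + t *\<^sub>R v0 | t. True}"
    using assms(4) unfolding is_line_def by blast
  obtain a where a: "q = q0 + a *\<^sub>R v0" using q L by blast
  obtain b where b: "q + v = q0 + b *\<^sub>R v0" using qv L by blast
  have vv: "v = (b - a) *\<^sub>R v0" using a b by (simp add: algebra_simps)
  have ba: "b - a \<noteq> 0" using vv nv by auto
  have Lq: "L = {q + t *\<^sub>R v | t. True}"
  proof (rule set_eqI, rule iffI)
    fix x assume "x \<in> L"
    then obtain t where t: "x = q0 + t *\<^sub>R v0" using L by blast
    have e: "a + ((t - a) / (b - a)) * (b - a) = t" using ba by simp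
    have gen: "q + c *\<^sub>R v = q0 + (a + c * (b - a)) *\<^sub>R v0" for c
      unfolding a vv by (simp add: scaleR_add_left scaleR_scaleR add.assoc)
    have "q + ((t - a) / (b - a)) *\<^sub>R v = q0 + (a + ((t - a) / (b - a)) * (b - a)) *\<^sub>R v0"
      by (rule gen)
    then have "x = q + ((t - a) / (b - a)) *\<^sub>R v" unfolding e t by simp
    then show "x \<in> {q + t *\<^sub>R v | t. True}" by blast
  next
    fix x assume "x \<in> {q + t *\<^sub>R v | t. True}"
    then obtain t where t: "x = q + t *\<^sub>R v" by blast
    have "x = q0 + (a + t * (b - a)) *\<^sub>R v0" unfolding t a vv by (simp add: algebra_simps)
    then show "x \<in> L" using L by blast
  qed
  define f where "f = blinfun_apply (J v)"
  have fv: "f v = 1" using J nv unfolding duality_mapping_def f_def by simp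
  have nf: "norm (J v) = 1" using J nv unfolding duality_mapping_def by simp
  have fbound: "\<bar>f z\<bar> \<le> norm z" for z
    using norm_blinfun[of "J v" z] nf unfolding f_def by simp
  define \<phi> where "\<phi> x = f (x - q)" for x
  have fdiff: "f (x - y) = f x - f y" for x y unfolding f_def by (simp add: blinfun.diff_right)
  have fscale: "f (t *\<^sub>R z) = t * f z" for t z unfolding f_def by (simp add: blinfun.scaleR_right)
  have phiL: "\<phi> (q + t *\<^sub>R v) = t" for t unfolding \<phi>_def by (simp add: fscale fv)
  have phidiff: "\<phi> x - \<phi> y = f (x - y)" for x y unfolding \<phi>_def by (simp add: fdiff)
  have phiPJ: "\<phi> (PJ x) = \<phi> x" for x
    unfolding PJ J_projection_def f_def[symmetric] using phiL[of "f (x - q)"] by (simp add: \<phi>_def)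
  have iso: "\<forall>x\<in>L. \<forall>y\<in>L. \<bar>\<phi> x - \<phi> y\<bar> = dist x y"
  proof (intro ballI)
    fix x y assume "x \<in> L" "y \<in> L"
    then obtain s t where s: "x = q + s *\<^sub>R v" and t: "y = q + t *\<^sub>R v" using Lq by blast
    have "dist x y = norm ((s - t) *\<^sub>R v)" unfolding s t dist_norm by (simp add: algebra_simps)
    also have "\<dots> = \<bar>s - t\<bar>" using nv by simp
    finally show "\<bar>\<phi> x - \<phi> y\<bar> = dist x y" unfolding s t phiL by simp
  qed
  have surj: "\<phi> ` L = UNIV"
  proof (rule set_eqI)
    fix t :: real
    have "q + t *\<^sub>R v \<in> L" using Lq by blast
    then show "t \<in> \<phi> ` L \<longleftrightarrow> t \<in> UNIV" using phiL[of t] by (metis UNIV_I image_eqI)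
  qed
  have pmL: "pm x \<in> L" for x using assms(8) unfolding metric_projection_def by blast
  have pmd: "norm (x - pm x) \<le> \<alpha> * \<delta>" if "x \<in> V" for x
    using assms(7,8) that unfolding metric_projection_def by metis
  have ord: "\<phi> (pm x) \<le> \<phi> (pm y) \<longleftrightarrow> \<phi> (PJ x) \<le> \<phi> (PJ y)" if xV: "x \<in> V" and yV: "y \<in> V" for x y
  proof (cases "x = y")
    case True then show ?thesis by simp
  next
    case False
    have sep: "dist x y \<ge> \<delta>" using assms(2) xV yV False unfolding delta_separated_def by blast
    have dx: "norm (x - pm x) \<le> \<alpha> * \<delta>" using pmd xV by blast
    have dy: "norm (y - pm y) \<le> \<alpha> * \<delta>" using pmd yV by blast
    have tri: "dist x y \<le> norm (x - pm x) + dist (pm x) (pm y) + norm (y - pm y)"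
    proof -
      have "x - y = (x - pm x) + (pm x - pm y) - (y - pm y)" by (simp add: algebra_simps)
      then have "norm (x - y) \<le> norm ((x - pm x) + (pm x - pm y)) + norm (y - pm y)"
        by (metis norm_triangle_ineq4)
      also have "\<dots> \<le> norm (x - pm x) + norm (pm x - pm y) + norm (y - pm y)"
        using norm_triangle_ineq[of "x - pm x" "pm x - pm y"] by linarith
      finally show ?thesis by (simp add: dist_norm)
    qed
    have isoxy: "\<bar>\<phi> (pm x) - \<phi> (pm y)\<bar> = dist (pm x) (pm y)" using iso pmL by blast
    have A: "\<bar>\<phi> (pm x) - \<phi> (pm y)\<bar> \<ge> \<delta> - 2 * \<alpha> * \<delta>"
      using isoxy tri sep dx dy by linarith
    have ex: "\<bar>\<phi> x - \<phi> (pm x)\<bar> \<le> \<alpha> * \<delta>"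
      using phidiff[of x "pm x"] fbound[of "x - pm x"] dx by linarith
    have ey: "\<bar>\<phi> y - \<phi> (pm y)\<bar> \<le> \<alpha> * \<delta>"
      using phidiff[of y "pm y"] fbound[of "y - pm y"] dy by linarith
    have "4 * \<alpha> * \<delta> < \<delta>" using assms(1,6) by simp
    then show ?thesis unfolding phiPJ using A ex ey by linarith
  qed
  show ?thesis using iso surj ord by blast
qed

end
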